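(* For every integer $q>1$ and every integer $n$, $$\left\lceil\frac{n}{q}\right\rceil=\sum_{i=0}^{q-1}\left\lceil\frac{n-i-\sum_{j=1}^{q-1}\left\lceil\frac{n-j}{q}\right\rceil}{q}\right\rceil,$$ i.e. $\lceil n/q\rceil$ formally satisfies the recursion $R(n)=\sum_{i=0}^{q-1}R\big(n-i-\sum_{j=1}^{q-1}R(n-j)\big)$. *)

theory Defs
  imports Complex_Main
begin

end

theory Submission
  imports Defs
begin

lemma herm_nat:
  fixes q m :: int and Q :: nat
  assumes "q = int Q" "q > 0"
  shows "(\<Sum>i<Q. (m + int i) div q) = m"
proof (induction m rule: int_induct[where k=0])
  case base
  have "\<forall>i<Q. int i div q = 0" using assms by simp
  then show ?case by simp
next
  case (step1 i)
  have "(\<Sum>k<Q. (i + 1 + int k) div q) = (\<Sum>k<Q. (i + int (Suc k)) div q)" by (simp add: ac_simps)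
  moreover have "(\<Sum>k<Q. (i + int k) div q) = i div q + (\<Sum>k<Q. (i + int (Suc k)) div q) - (i + int Q) div q"
    using sum.lessThan_Suc_shift[of "\<lambda>k. (i + int k) div q" Q] sum.lessThan_Suc[of "\<lambda>k. (i + int k) div q" Q]
    by simp
  moreover have "(i + int Q) div q = i div q + 1" using assms by (simp add: ac_simps)
  ultimately show ?case using step1 by simp
next
  case (step2 i)
  have "(\<Sum>k<Q. (i - 1 + int k) div q) = (i - 1) div q + (\<Sum>k<Q. (i - 1 + int (Suc k)) div q) - (i - 1 + int Q) div q"
    using sum.lessThan_Suc_shift[of "\<lambda>k. (i - 1 + int k) div q" Q] sum.lessThan_Suc[of "\<lambda>k. (i - 1 + int k) div q" Q]
    by simp
  moreover have "(\<Sum>k<Q. (i - 1 + int (Suc k)) div q) = (\<Sum>k<Q. (i + int k) div q)" by simp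
  moreover have "(i - 1 + int Q) div q = (i - 1) div q + 1" using assms by (simp add: ac_simps)
  ultimately show ?case using step2 by simp
qed

lemma sum_int_nat:
  "(\<Sum>i=0..int Q - 1. f i) = (\<Sum>i<Q. f (int i))"
proof (induction Q)
  case 0
  then show ?case by simp
next
  case (Suc Q)
  have "{0..int (Suc Q) - 1} = insert (int Q) {0..int Q - 1}" by auto
  then show ?case using Suc by (simp add: add.commute)
qed

lemma ceil_sum:
  fixes q m :: int
  assumes "q > 0"
  shows "(\<Sum>i=0..q-1. \<lceil>real_of_int (m - i) / real_of_int q\<rceil>) = m"
proof -
  obtain Q where Q: "q = int Q" using assms by (metis pos_int_cases less_imp_le)
  have c: "\<lceil>real_of_int (m - i) / real_of_int q\<rceil> = - ((-m + i) div q)" for i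
  proof -
    have "\<lceil>real_of_int (m - i) / real_of_int q\<rceil> = - \<lfloor>real_of_int (-m + i) / real_of_int q\<rfloor>"
      by (simp add: ceiling_def minus_divide_left)
    then show ?thesis by (metis floor_divide_of_int_eq)
  qed
  have "(\<Sum>i=0..q-1. \<lceil>real_of_int (m - i) / real_of_int q\<rceil>) = (\<Sum>i<Q. - ((-m + int i) div q))"
    using sum_int_nat[of "\<lambda>i. - ((-m + i) div q)" Q] by (subst sum.cong[OF refl c]) (simp add: Q)
  also have "\<dots> = - (\<Sum>i<Q. ((-m + int i) div q))" by (simp add: sum_negf)
  also have "\<dots> = m" using herm_nat[of q Q "-m"] Q assms by simp
  finally show ?thesis .
qed

theorem theorem6:
  fixes q n :: int
  assumes "q > 1"
  shows "\<lceil>real_of_int n / real_of_int q\<rceil> =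
    (\<Sum>i = 0..q - 1. \<lceil>real_of_int (n - i - (\<Sum>j = 1..q - 1. \<lceil>real_of_int (n - j) / real_of_int q\<rceil>)) / real_of_int q\<rceil>)"
proof -
  define S where "S = (\<Sum>j = 1..q - 1. \<lceil>real_of_int (n - j) / real_of_int q\<rceil>)"
  have "{0..q-1} = insert 0 {1..q-1}" using assms by auto
  hence "(\<Sum>i=0..q-1. \<lceil>real_of_int (n - i) / real_of_int q\<rceil>) = \<lceil>real_of_int n / real_of_int q\<rceil> + S"
    unfolding S_def by simp
  hence S: "S = n - \<lceil>real_of_int n / real_of_int q\<rceil>" using ceil_sum[of q n] assms by simp
  have "(\<Sum>i = 0..q - 1. \<lceil>real_of_int (n - i - S) / real_of_int q\<rceil>)
     = (\<Sum>i = 0..q - 1. \<lceil>real_of_int (\<lceil>real_of_int n / real_of_int q\<rceil> - i) / real_of_int q\<rceil>)"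
    by (simp add: S)
  also have "\<dots> = \<lceil>real_of_int n / real_of_int q\<rceil>" using ceil_sum assms by simp
  finally show ?thesis unfolding S_def by simp
qed

end
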